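(* Let $n\ge 2$ and $k>0$. Then $\mathbf{H}$ is $(k,\dots,k)$-increasing: $\mathbf{H}(\mathbf{x})\le\mathbf{H}(x_1+tk,\dots,x_n+tk)$ for all $\mathbf{x}\in[0,1]^n$ and $t>0$ with $(x_1+tk,\dots,x_n+tk)\in[0,1]^n$.
   Context: For $\mathbf{x}\in[0,1]^n$ let $x_{(1)}\ge\dots\ge x_{(n)}$ be its entries in decreasing order, and define the median $Med(\mathbf{x})=\frac12(x_{(k)}+x_{(k+1)})$ if $n=2k$ and $Med(\mathbf{x})=x_{(k+1)}$ if $n=2k+1$ (here $k$ is just the index for the median). Define $f_i(\mathbf{x})=\frac1n$ if $x_1=\dots=x_n$, and otherwise $f_i(\mathbf{x})=\frac{1}{n-1}\Big(1-\frac{|x_i-Med(\mathbf{x})|}{\sum_{j=1}^n|x_j-Med(\mathbf{x})|}\Big)$. Then $\mathbf{H}(\mathbf{x})=\sum_{i=1}^n f_i(\mathbf{x})\,x_i$. *)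

theory Defs
  imports "HOL-Analysis.Analysis"
begin

text \<open>Vectors x in [0,1]^n are represented as functions nat => real, using
coordinates 0..n-1 (paper's x_1..x_n).\<close>

definition med :: "nat \<Rightarrow> (nat \<Rightarrow> real) \<Rightarrow> real" where
  "med n x = (let s = rev (sort (map x [0..<n])); k = n div 2 in
     if even n then (s ! (k - 1) + s ! k) / 2 else s ! k)"

definition fw :: "nat \<Rightarrow> (nat \<Rightarrow> real) \<Rightarrow> nat \<Rightarrow> real" where
  "fw n x i = (if (\<forall>j<n. x j = x 0) then 1 / real n
     else (1 / (real n - 1)) * (1 - \<bar>x i - med n x\<bar> / (\<Sum>j<n. \<bar>x j - med n x\<bar>)))"

definition H :: "nat \<Rightarrow> (nat \<Rightarrow> real) \<Rightarrow> real" where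
  "H n x = (\<Sum>i<n. fw n x i * x i)"

end

theory Submission
  imports Defs
begin

lemma insort_shift: "insort (a + c) (map (\<lambda>v. v + (c::real)) ys) = map (\<lambda>v. v + c) (insort a ys)"
  by (induction ys) auto

lemma sort_shift: "sort (map (\<lambda>v. v + (c::real)) xs) = map (\<lambda>v. v + c) (sort xs)"
  proof (induction xs)
  case (Cons a xs)
  have "sort (map (\<lambda>v. v + c) (a # xs)) = insort (a + c) (sort (map (\<lambda>v. v + c) xs))" by simp
  also have "\<dots> = insort (a + c) (map (\<lambda>v. v + c) (sort xs))" by (simp only: Cons.IH)
  also have "\<dots> = map (\<lambda>v. v + c) (insort a (sort xs))" by (rule insort_shift)
  finally show ?case by simp
qed simp

lemma ifshift: "(if P then (a + c + (b + c))/2 else b + c) = (if P then (a+b)/2 else b) + (c::real)"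
  by (cases P) (simp_all add: field_simps)

lemma med_shift:
  assumes "n \<ge> 1"
  shows "med n (\<lambda>i. x i + c) = med n x + c"
proof -
  have "map (\<lambda>i. x i + c) [0..<n] = map (\<lambda>v. v + c) (map x [0..<n])" by simp
  hence s: "rev (sort (map (\<lambda>i. x i + c) [0..<n])) = map (\<lambda>v. v + c) (rev (sort (map x [0..<n])))"
    by (simp only: sort_shift rev_map)
  have l: "length (rev (sort (map x [0..<n]))) = n" by simp
  have k1: "n div 2 < n" using assms by simp
  have k2: "n div 2 - 1 < n" using assms by simp
  define r where "r = rev (sort (map x [0..<n]))"
  have a1: "map (\<lambda>v. v + c) r ! (n div 2) = r ! (n div 2) + c"
    using k1 l unfolding r_def[symmetric] by (metis nth_map)
  have a2: "map (\<lambda>v. v + c) r ! (n div 2 - 1) = r ! (n div 2 - 1) + c"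
    using k2 l unfolding r_def[symmetric] by (metis nth_map)
  show ?thesis unfolding med_def Let_def s r_def[symmetric] a1 a2
    by (rule ifshift)
qed

lemma fw_shift:
  assumes "n \<ge> 1"
  shows "fw n (\<lambda>i. x i + c) i = fw n x i"
proof -
  have e1: "(\<forall>j<n. x j + c = x 0 + c) = (\<forall>j<n. x j = x 0)" by simp
  have e2: "\<And>j. x j + c - (med n x + c) = x j - med n x" by simp
  show ?thesis by (simp only: fw_def med_shift[OF assms] e1 e2)
qed

lemma fw_nonneg:
  assumes "n \<ge> 2" "i < n"
  shows "fw n x i \<ge> 0"
proof -
  let ?S = "\<Sum>j<n. \<bar>x j - med n x\<bar>"
  have le: "\<bar>x i - med n x\<bar> \<le> ?S"
    using assms(2) by (intro member_le_sum) auto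
  have "\<bar>x i - med n x\<bar> / ?S \<le> 1"
  proof (cases "?S = 0")
    case True thus ?thesis by simp
  next
    case False
    hence "?S > 0" using le by linarith
    thus ?thesis using le by simp
  qed
  moreover have "real n - 1 > 0" using assms by simp
  ultimately have "1 / (real n - 1) * (1 - \<bar>x i - med n x\<bar> / ?S) \<ge> 0"
    by (intro mult_nonneg_nonneg) simp_all
  moreover have "1 / real n \<ge> 0" by simp
  ultimately show ?thesis unfolding fw_def by (simp only: if_split) blast
qed

theorem proposition18:
  fixes n :: nat and k t :: real and x :: "nat \<Rightarrow> real"
  assumes "n \<ge> 2" and "k > 0" and "t > 0"
    and "\<forall>i<n. 0 \<le> x i \<and> x i \<le> 1"
    and "\<forall>i<n. 0 \<le> x i + t * k \<and> x i + t * k \<le> 1"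
  shows "H n x \<le> H n (\<lambda>i. x i + t * k)"
proof -
  have n1: "n \<ge> 1" using assms(1) by simp
  have "H n (\<lambda>i. x i + t * k) = (\<Sum>i<n. fw n x i * x i + fw n x i * (t * k))"
    unfolding H_def fw_shift[OF n1] by (simp add: algebra_simps)
  also have "\<dots> = H n x + (\<Sum>i<n. fw n x i * (t * k))"
    unfolding H_def by (simp add: sum.distrib)
  finally have e: "H n (\<lambda>i. x i + t * k) = H n x + (\<Sum>i<n. fw n x i * (t * k))" .
  have "(\<Sum>i<n. fw n x i * (t * k)) \<ge> 0"
    using fw_nonneg[OF assms(1)] assms(2,3) by (intro sum_nonneg) simp
  thus ?thesis using e by simp
qed

end
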